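(* Let $\mathbb{F}\in\{\mathbb{R},\mathbb{C}\}$, let $F=\{f_i\}_{i=1}^n$ be a $2_c$-uniform $(n,k)$-frame in $\mathbb{F}^k$ with analysis operator $V$, and let $Q$ be its Seidel matrix, i.e. the $n\times n$ matrix with $VV^*=\frac{k}{n}I_n+c_{n,k}Q$, where $c_{n,k}=\sqrt{\frac{k(n-k)}{n^2(n-1)}}$. Then for every $1\le m\le n$, $$e_m^{\infty}(F)\le \frac{k}{n}+(m-1)c_{n,k},$$ with equality if and only if some $m\times m$ principal submatrix $Q_m$ of $Q$ (obtained by keeping the same set of $m$ rows and columns) is switching equivalent to $J_m-I_m$, where $J_m$ is the $m\times m$ all-ones matrix.
   Context: An $(n,k)$-frame is a Parseval frame $\{f_i\}_{i=1}^n$ for $\mathbb{F}^k$; its analysis operator $V:\mathbb{F}^k\to\mathbb{F}^n$, $Vx=(\langle x,f_i\rangle)_{i=1}^n$, is an isometry. Let $\mathcal{D}_m$ be the set of $n\times n$ diagonal matrices with exactly $m$ diagonal entries equal to $1$ and the rest $0$, and $e_m^{\infty}(F)=\max\{\|V^*DV\|: D\in\mathcal{D}_m\}$ (operator norm). $F$ is called $m$-uniform if $\|V^*DV\|$ is the same for all $D\in\mathcal{D}_m$, and $m_c$-uniform if it is $\ell$-uniform for every $\ell=1,\dots,m$; a $2_c$-uniform $(n,k)$-frame is exactly an equiangular Parseval frame, and for it $VV^*=\frac{k}{n}I+c_{n,k}Q$ with $Q$ a Seidel matrix. A Seidel matrix is a self-adjoint $n\times n$ matrix with zero diagonal and off-diagonal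 entries of modulus $1$. Two Seidel matrices $Q,S$ are switching equivalent if $Q=PDSD^{-1}P^{-1}$ for some permutation matrix $P$ and some diagonal matrix $D$ whose diagonal entries have modulus $1$. *)

theory Defs
  imports Complex_Main "HOL-Combinatorics.Permutations"
begin

text \<open>The scalar field F is modelled as a subset K of the complex numbers,
  K = \<real> (real case) or K = UNIV (complex case). Vectors in F^k are functions
  nat => complex with entries in K at indices < k (entries elsewhere are irrelevant);
  n x k matrices are functions nat => nat => complex, used only at indices below the size.
  A frame is f :: nat => nat => complex, f i = the i-th frame vector (i < n).\<close>

definition vnorm :: "nat \<Rightarrow> (nat \<Rightarrow> complex) \<Rightarrow> real" where
  "vnorm k x = sqrt (\<Sum>j<k. (cmod (x j))\<^sup>2)"

definition opnorm :: "complex set \<Rightarrow> nat \<Rightarrow> (nat \<Rightarrow> nat \<Rightarrow> complex) \<Rightarrow> real" where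
  "opnorm K k A = Sup {vnorm k (\<lambda>i. \<Sum>j<k. A i j * x j) | x.
                        (\<forall>j<k. x j \<in> K) \<and> vnorm k x = 1}"

text \<open>Analysis operator V (n x k matrix): (V x)_i = <x, f_i> = sum_j x_j * cnj (f_i j).\<close>
definition analysis :: "(nat \<Rightarrow> nat \<Rightarrow> complex) \<Rightarrow> nat \<Rightarrow> nat \<Rightarrow> complex" where
  "analysis f i j = cnj (f i j)"

text \<open>(n,k)-frame: Parseval frame for F^k, i.e. vectors in F^k whose analysis operator is
  an isometry, V^* V = I_k.\<close>
definition parseval_frame :: "complex set \<Rightarrow> nat \<Rightarrow> nat \<Rightarrow> (nat \<Rightarrow> nat \<Rightarrow> complex) \<Rightarrow> bool" where
  "parseval_frame K n k f \<longleftrightarrow>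
     (\<forall>i<n. \<forall>j<k. f i j \<in> K) \<and>
     (\<forall>j<k. \<forall>l<k. (\<Sum>i<n. cnj (analysis f i j) * analysis f i l) = (if j = l then 1 else 0))"

text \<open>D in D_m is identified with the set S of positions of its m ones; V^* D V:\<close>
definition VDV :: "(nat \<Rightarrow> nat \<Rightarrow> complex) \<Rightarrow> nat set \<Rightarrow> nat \<Rightarrow> nat \<Rightarrow> complex" where
  "VDV f S j l = (\<Sum>i\<in>S. cnj (analysis f i j) * analysis f i l)"

definition Dsets :: "nat \<Rightarrow> nat \<Rightarrow> nat set set" where
  "Dsets n m = {S. S \<subseteq> {..<n} \<and> card S = m}"

definition e_inf :: "complex set \<Rightarrow> nat \<Rightarrow> nat \<Rightarrow> (nat \<Rightarrow> nat \<Rightarrow> complex) \<Rightarrow> nat \<Rightarrow> real" where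
  "e_inf K n k f m = Max ((\<lambda>S. opnorm K k (VDV f S)) ` Dsets n m)"

definition uniform :: "complex set \<Rightarrow> nat \<Rightarrow> nat \<Rightarrow> (nat \<Rightarrow> nat \<Rightarrow> complex) \<Rightarrow> nat \<Rightarrow> bool" where
  "uniform K n k f m \<longleftrightarrow>
     (\<forall>S\<in>Dsets n m. \<forall>T\<in>Dsets n m. opnorm K k (VDV f S) = opnorm K k (VDV f T))"

definition c_uniform :: "complex set \<Rightarrow> nat \<Rightarrow> nat \<Rightarrow> (nat \<Rightarrow> nat \<Rightarrow> complex) \<Rightarrow> nat \<Rightarrow> bool" where
  "c_uniform K n k f m \<longleftrightarrow> (\<forall>l. 1 \<le> l \<and> l \<le> m \<longrightarrow> uniform K n k f l)"

definition seidel :: "nat \<Rightarrow> (nat \<Rightarrow> nat \<Rightarrow> complex) \<Rightarrow> bool" where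
  "seidel n Q \<longleftrightarrow> (\<forall>i<n. \<forall>j<n. Q i j = cnj (Q j i)) \<and> (\<forall>i<n. Q i i = 0) \<and>
                   (\<forall>i<n. \<forall>j<n. i \<noteq> j \<longrightarrow> cmod (Q i j) = 1)"

definition c_nk :: "nat \<Rightarrow> nat \<Rightarrow> real" where
  "c_nk n k = sqrt (real k * (real n - real k) / ((real n)\<^sup>2 * (real n - 1)))"

text \<open>Switching equivalence of m x m matrices over F: A = P D B D^{-1} P^{-1}, P the
  permutation matrix of a permutation of {0..<m} (entrywise: (P M P^{-1})_{ij} = M_{q i, q j}
  with q = p^{-1}), D diagonal with unimodular diagonal entries in F.\<close>
definition switching_equiv :: "complex set \<Rightarrow> nat \<Rightarrow> (nat \<Rightarrow> nat \<Rightarrow> complex) \<Rightarrow> (nat \<Rightarrow> nat \<Rightarrow> complex) \<Rightarrow> bool" where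
  "switching_equiv K m A B \<longleftrightarrow>
     (\<exists>q d. q permutes {..<m} \<and> (\<forall>i<m. d i \<in> K \<and> cmod (d i) = 1) \<and>
        (\<forall>i<m. \<forall>j<m. A i j = d (q i) * B (q i) (q j) / d (q j)))"

definition principal_sub :: "(nat \<Rightarrow> nat \<Rightarrow> complex) \<Rightarrow> nat set \<Rightarrow> nat \<Rightarrow> nat \<Rightarrow> complex" where
  "principal_sub Q S a b = Q (sorted_list_of_set S ! a) (sorted_list_of_set S ! b)"

definition JmI :: "nat \<Rightarrow> nat \<Rightarrow> complex" where
  "JmI i j = (if i = j then 0 else 1)"

end

theory Submission
  imports Defs "HOL-Analysis.L2_Norm"
begin


definition yv :: "(nat \<Rightarrow> nat \<Rightarrow> complex) \<Rightarrow> nat \<Rightarrow> (nat \<Rightarrow> complex) \<Rightarrow> nat \<Rightarrow> complex" where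
  "yv f k x i = (\<Sum>l<k. cnj (f i l) * x l)"

definition Av :: "(nat \<Rightarrow> nat \<Rightarrow> complex) \<Rightarrow> nat \<Rightarrow> nat set \<Rightarrow> (nat \<Rightarrow> complex) \<Rightarrow> nat \<Rightarrow> complex" where
  "Av f k S x = (\<lambda>j. \<Sum>l<k. VDV f S j l * x l)"

definition Gm :: "(nat \<Rightarrow> nat \<Rightarrow> complex) \<Rightarrow> nat \<Rightarrow> nat \<Rightarrow> nat \<Rightarrow> complex" where
  "Gm f k i p = (\<Sum>l<k. analysis f i l * cnj (analysis f p l))"

lemma Av_eq: "finite S \<Longrightarrow> Av f k S x j = (\<Sum>i\<in>S. f i j * yv f k x i)"
  unfolding Av_def VDV_def analysis_def yv_def
  by (simp add: sum_distrib_left sum_distrib_right mult.assoc sum.swap[of _ S])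

lemma cnorm_sq: "(complex_of_real (cmod z))\<^sup>2 = z * cnj z"
  using complex_norm_square[of z] by simp

lemma vnorm_sq: "(vnorm k x)\<^sup>2 = (\<Sum>j<k. (cmod (x j))\<^sup>2)"
  unfolding vnorm_def using sum_nonneg[of "{..<k}" "\<lambda>j. (cmod (x j))\<^sup>2"] by simp

lemma vnorm_L2: "vnorm k x = L2_set (\<lambda>j. cmod (x j)) {..<k}"
  unfolding vnorm_def L2_set_def by simp

lemma vnorm_nonneg: "vnorm k x \<ge> 0"
  unfolding vnorm_def by (simp add: sum_nonneg)

lemma Re_ofr: "Re (complex_of_real a * z) = a * Re z" by simp

lemma vnorm_scale: "vnorm k (\<lambda>j. c * x j) = cmod c * vnorm k x"
  unfolding vnorm_def by (simp add: norm_mult power_mult_distrib sum_distrib_left[symmetric] real_sqrt_mult)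

lemma Av_scale: "Av f k S (\<lambda>j. c * x j) = (\<lambda>j. c * Av f k S x j)"
  unfolding Av_def by (simp add: sum_distrib_left mult_ac)

lemma prod_sums: "(\<Sum>p\<in>A. F p) * (\<Sum>i\<in>B. G i) = (\<Sum>i\<in>B. \<Sum>p\<in>A. G i * (F p :: complex))"
  by (subst sum_product, subst sum.swap) (simp add: mult.commute)

lemma sq_norm_Av:
  assumes "finite S"
  shows "complex_of_real ((vnorm k (Av f k S x))\<^sup>2) =
     (\<Sum>i\<in>S. \<Sum>p\<in>S. cnj (yv f k x i) * Gm f k i p * yv f k x p)"
proof -
  let ?y = "yv f k x"
  have "complex_of_real ((vnorm k (Av f k S x))\<^sup>2) = (\<Sum>j<k. Av f k S x j * cnj (Av f k S x j))"
    by (simp add: vnorm_sq cnorm_sq)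
  also have "\<dots> = (\<Sum>j<k. (\<Sum>p\<in>S. f p j * ?y p) * (\<Sum>i\<in>S. cnj (f i j) * cnj (?y i)))"
    using assms by (simp add: Av_eq)
  also have "\<dots> = (\<Sum>j<k. \<Sum>i\<in>S. \<Sum>p\<in>S. cnj (?y i) * (cnj (f i j) * f p j) * ?y p)"
    unfolding prod_sums by (intro sum.cong refl) (simp add: mult_ac)
  also have "\<dots> = (\<Sum>i\<in>S. \<Sum>j<k. \<Sum>p\<in>S. cnj (?y i) * (cnj (f i j) * f p j) * ?y p)"
    by (rule sum.swap)
  also have "\<dots> = (\<Sum>i\<in>S. \<Sum>p\<in>S. \<Sum>j<k. cnj (?y i) * (cnj (f i j) * f p j) * ?y p)"
    by (intro sum.cong refl sum.swap)
  also have "\<dots> = (\<Sum>i\<in>S. \<Sum>p\<in>S. cnj (?y i) * Gm f k i p * ?y p)"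
    unfolding Gm_def analysis_def
    by (intro sum.cong refl) (simp add: sum_distrib_left sum_distrib_right)
  finally show ?thesis .
qed

lemma inner_Av:
  assumes "finite S"
  shows "(\<Sum>j<k. Av f k S x j * cnj (x j)) = (\<Sum>i\<in>S. complex_of_real ((cmod (yv f k x i))\<^sup>2))"
proof -
  have "(\<Sum>j<k. Av f k S x j * cnj (x j)) = (\<Sum>j<k. \<Sum>i\<in>S. f i j * yv f k x i * cnj (x j))"
    using assms by (simp add: Av_eq sum_distrib_right)
  also have "\<dots> = (\<Sum>i\<in>S. yv f k x i * cnj (yv f k x i))"
    unfolding yv_def
    by (simp add: sum.swap[of _ S] sum_distrib_left sum_distrib_right mult_ac)
  finally show ?thesis by (simp add: cnorm_sq)
qed

lemma N_le:
  assumes "finite S"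
  shows "(\<Sum>i\<in>S. (cmod (yv f k x i))\<^sup>2) \<le> vnorm k (Av f k S x) * vnorm k x"
proof -
  have e: "complex_of_real (\<Sum>i\<in>S. (cmod (yv f k x i))\<^sup>2) = (\<Sum>j<k. Av f k S x j * cnj (x j))"
    using inner_Av[OF assms, of f k x] by simp
  have nn: "0 \<le> (\<Sum>i\<in>S. (cmod (yv f k x i))\<^sup>2)" by (simp add: sum_nonneg)
  have "(\<Sum>i\<in>S. (cmod (yv f k x i))\<^sup>2) = cmod (complex_of_real (\<Sum>i\<in>S. (cmod (yv f k x i))\<^sup>2))"
    by (simp only: norm_of_real abs_of_nonneg[OF nn])
  also have "\<dots> = cmod (\<Sum>j<k. Av f k S x j * cnj (x j))" using e by simp
  also have "\<dots> \<le> (\<Sum>j<k. \<bar>cmod (Av f k S x j)\<bar> * \<bar>cmod (x j)\<bar>)"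
    by (rule order_trans[OF norm_sum]) (simp add: norm_mult)
  also have "\<dots> \<le> vnorm k (Av f k S x) * vnorm k x"
    unfolding vnorm_L2 by (rule L2_set_mult_ineq)
  finally show ?thesis .
qed


lemma term_id:
  assumes "cmod q = 1"
  shows "(cmod (a - q * b))\<^sup>2 = (cmod a)\<^sup>2 + (cmod b)\<^sup>2 - 2 * Re (cnj a * q * b)"
proof -
  have qq: "q * cnj q = 1" using assms cnorm_sq[of q] by simp
  have "complex_of_real ((cmod (a - q * b))\<^sup>2) = (a - q*b) * cnj (a - q*b)"
    using cnorm_sq by simp
  also have "\<dots> = a * cnj a + (q * cnj q) * (b * cnj b) - (cnj a * q * b + cnj (cnj a * q * b))"
    by (simp add: algebra_simps)
  also have "\<dots> = complex_of_real ((cmod a)\<^sup>2) + complex_of_real ((cmod b)\<^sup>2) - complex_of_real (2 * Re (cnj a * q * b))"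
    by (simp only: qq mult_1_left complex_norm_square[symmetric] complex_add_cnj assms power_one of_real_1)
  also have "\<dots> = complex_of_real ((cmod a)\<^sup>2 + (cmod b)\<^sup>2 - 2 * Re (cnj a * q * b))"
    by (simp only: of_real_add of_real_diff)
  finally show ?thesis using of_real_eq_iff by blast
qed

lemma E_id:
  assumes fin: "finite S" and hq: "\<forall>i\<in>S. \<forall>p\<in>S. i \<noteq> p \<longrightarrow> cmod (Q i p) = 1"
    and d0: "\<forall>i\<in>S. Q i i = 0"
  shows "Re (\<Sum>i\<in>S. \<Sum>p\<in>S. cnj (u i) * Q i p * u p) =
     (real (card S) - 1) * (\<Sum>i\<in>S. (cmod (u i))\<^sup>2)
     - (\<Sum>i\<in>S. \<Sum>p\<in>S-{i}. (cmod (u i - Q i p * u p))\<^sup>2) / 2"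
proof -
  let ?N = "\<Sum>i\<in>S. (cmod (u i))\<^sup>2"
  have inner: "(\<Sum>p\<in>S-{i}. (cmod (u i - Q i p * u p))\<^sup>2) =
      (real (card S) - 1) * (cmod (u i))\<^sup>2 + (?N - (cmod (u i))\<^sup>2)
      - 2 * Re (\<Sum>p\<in>S. cnj (u i) * Q i p * u p)" if i: "i \<in> S" for i
  proof -
    have "(\<Sum>p\<in>S-{i}. (cmod (u i - Q i p * u p))\<^sup>2) =
        (\<Sum>p\<in>S-{i}. (cmod (u i))\<^sup>2 + (cmod (u p))\<^sup>2 - 2 * Re (cnj (u i) * Q i p * u p))"
      using hq i by (intro sum.cong) (auto simp: term_id)
    also have "\<dots> = real (card (S - {i})) * (cmod (u i))\<^sup>2 + (\<Sum>p\<in>S-{i}. (cmod (u p))\<^sup>2)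
        - 2 * Re (\<Sum>p\<in>S-{i}. cnj (u i) * Q i p * u p)"
      by (simp add: sum.distrib sum_subtractf sum_distrib_left Re_sum)
    also have "(\<Sum>p\<in>S-{i}. (cmod (u p))\<^sup>2) = ?N - (cmod (u i))\<^sup>2"
      using fin i by (simp add: sum_diff1)
    also have "(\<Sum>p\<in>S-{i}. cnj (u i) * Q i p * u p) = (\<Sum>p\<in>S. cnj (u i) * Q i p * u p)"
      using fin i d0 by (simp add: sum_diff1)
    also have "real (card (S - {i})) = real (card S) - 1"
    proof -
      have "0 < card S" using fin i card_gt_0_iff[of S] by blast
      then show ?thesis using fin i by (simp add: of_nat_diff Suc_le_eq)
    qed
    finally show ?thesis .
  qed
  have "(\<Sum>i\<in>S. \<Sum>p\<in>S-{i}. (cmod (u i - Q i p * u p))\<^sup>2) =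
     (\<Sum>i\<in>S. (real (card S) - 1) * (cmod (u i))\<^sup>2 + (?N - (cmod (u i))\<^sup>2)
      - 2 * Re (\<Sum>p\<in>S. cnj (u i) * Q i p * u p))"
    using inner by (rule sum.cong[OF refl])
  also have "\<dots> = (real (card S) - 1) * ?N + (real (card S) * ?N - ?N)
      - 2 * Re (\<Sum>i\<in>S. \<Sum>p\<in>S. cnj (u i) * Q i p * u p)"
    by (simp add: sum.distrib sum_subtractf sum_distrib_left Re_sum)
  finally show ?thesis by (simp add: algebra_simps)
qed


lemma c_pos: "1 \<le> k \<Longrightarrow> k < n \<Longrightarrow> c_nk n k > 0"
  unfolding c_nk_def by (auto intro!: divide_pos_pos mult_pos_pos)

lemma seidel_H: "seidel n Q \<Longrightarrow> i < n \<Longrightarrow> j < n \<Longrightarrow> Q i j = cnj (Q j i)"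
  unfolding seidel_def by blast
lemma seidel_D: "seidel n Q \<Longrightarrow> i < n \<Longrightarrow> Q i i = 0"
  unfolding seidel_def by blast
lemma seidel_U: "seidel n Q \<Longrightarrow> i < n \<Longrightarrow> j < n \<Longrightarrow> i \<noteq> j \<Longrightarrow> cmod (Q i j) = 1"
  unfolding seidel_def by blast

definition EE :: "(nat \<Rightarrow> nat \<Rightarrow> complex) \<Rightarrow> nat set \<Rightarrow> (nat \<Rightarrow> complex) \<Rightarrow> real" where
  "EE Q S u = (\<Sum>i\<in>S. \<Sum>p\<in>S-{i}. (cmod (u i - Q i p * u p))\<^sup>2)"

lemma key_id:
  assumes gram: "\<forall>i<n. \<forall>j<n. (\<Sum>l<k. analysis f i l * cnj (analysis f j l)) =
                 (if i = j then complex_of_real (real k / real n) else 0)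
                 + complex_of_real (c_nk n k) * Q i j"
    and seidelQ: "seidel n Q" and S: "S \<subseteq> {..<n}"
  shows "(vnorm k (Av f k S x))\<^sup>2 = (real k / real n + (real (card S) - 1) * c_nk n k) *
            (\<Sum>i\<in>S. (cmod (yv f k x i))\<^sup>2) - c_nk n k / 2 * EE Q S (yv f k x)"
proof -
  have fin: "finite S" using S finite_subset by blast
  let ?y = "yv f k x"
  let ?t = "complex_of_real (real k / real n)" and ?C = "complex_of_real (c_nk n k)"
  have G: "Gm f k i p = (if i = p then ?t else 0) + ?C * Q i p" if "i \<in> S" "p \<in> S" for i p
  proof -
    have "i < n" "p < n" using that S by auto
    then show ?thesis using gram unfolding Gm_def by simp
  qed
  have inner: "(\<Sum>p\<in>S. cnj (?y i) * Gm f k i p * ?y p) =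
     ?t * complex_of_real ((cmod (?y i))\<^sup>2) + ?C * (\<Sum>p\<in>S. cnj (?y i) * Q i p * ?y p)"
    if i: "i \<in> S" for i
  proof -
    have "(\<Sum>p\<in>S. cnj (?y i) * Gm f k i p * ?y p) =
       (\<Sum>p\<in>S. (if p = i then ?t * complex_of_real ((cmod (?y i))\<^sup>2) else 0) + ?C * (cnj (?y i) * Q i p * ?y p))"
      using G i by (intro sum.cong refl) (auto simp: algebra_simps cnorm_sq)
    also have "\<dots> = ?t * complex_of_real ((cmod (?y i))\<^sup>2) + ?C * (\<Sum>p\<in>S. cnj (?y i) * Q i p * ?y p)"
      using fin i by (simp only: sum.distrib sum.delta if_True sum_distrib_left)
    finally show ?thesis .
  qed
  have "complex_of_real ((vnorm k (Av f k S x))\<^sup>2) =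
      (\<Sum>i\<in>S. ?t * complex_of_real ((cmod (?y i))\<^sup>2) + ?C * (\<Sum>p\<in>S. cnj (?y i) * Q i p * ?y p))"
    unfolding sq_norm_Av[OF fin] using inner by (rule sum.cong[OF refl])
  also have "\<dots> = complex_of_real (real k / real n * (\<Sum>i\<in>S. (cmod (?y i))\<^sup>2))
       + ?C * (\<Sum>i\<in>S. \<Sum>p\<in>S. cnj (?y i) * Q i p * ?y p)"
    by (simp only: sum.distrib sum_distrib_left of_real_mult of_real_sum)
  finally have "(vnorm k (Av f k S x))\<^sup>2 = Re (\<dots>)" by (metis Re_complex_of_real)
  also have "\<dots> = real k / real n * (\<Sum>i\<in>S. (cmod (?y i))\<^sup>2)
       + c_nk n k * Re (\<Sum>i\<in>S. \<Sum>p\<in>S. cnj (?y i) * Q i p * ?y p)"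
    by (simp only: plus_complex.sel Re_complex_of_real Re_ofr Im_complex_of_real)
  also have "Re (\<Sum>i\<in>S. \<Sum>p\<in>S. cnj (?y i) * Q i p * ?y p) =
     (real (card S) - 1) * (\<Sum>i\<in>S. (cmod (?y i))\<^sup>2) - EE Q S ?y / 2"
    unfolding EE_def using seidelQ S fin by (intro E_id) (auto intro: seidel_D seidel_U)
  finally show ?thesis by (simp add: algebra_simps)
qed




lemma EE_nonneg: "0 \<le> EE Q S u"
  unfolding EE_def by (intro sum_nonneg) auto

lemma term_le_EE:
  assumes fin: "finite S" and a: "a \<in> S" and b: "b \<in> S" and ab: "a \<noteq> b"
  shows "cmod (u a - Q a b * u b) \<le> sqrt (EE Q S u)"
proof -
  have "(cmod (u a - Q a b * u b))\<^sup>2 \<le> (\<Sum>p\<in>S-{a}. (cmod (u a - Q a p * u p))\<^sup>2)"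
    using fin b ab by (intro member_le_sum) auto
  also have "\<dots> \<le> EE Q S u"
    unfolding EE_def using fin a by (intro member_le_sum[where f = "\<lambda>i. \<Sum>p\<in>S-{i}. (cmod (u i - Q i p * u p))\<^sup>2"] sum_nonneg) auto
  finally show ?thesis by (simp add: real_le_rsqrt)
qed

lemma tri_bound:
  assumes fin: "finite S" and hq: "\<forall>i\<in>S. \<forall>p\<in>S. i \<noteq> p \<longrightarrow> cmod (Q i p) = 1"
    and i: "i \<in> S" and p: "p \<in> S" and r: "r \<in> S" and ip: "i \<noteq> p" and pr: "p \<noteq> r" and ri: "r \<noteq> i"
    and om: "Q i p * Q p r * Q r i \<noteq> 1"
  shows "(\<Sum>q\<in>S. (cmod (u q))\<^sup>2) \<le> real (card S) * (1 + 3 / cmod (1 - Q i p * Q p r * Q r i))\<^sup>2 * EE Q S u"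
proof -
  define \<omega> where "\<omega> = Q i p * Q p r * Q r i"
  define e where "e = sqrt (EE Q S u)"
  define C where "C = 1 + 3 / cmod (1 - \<omega>)"
  have e0: "0 \<le> e" unfolding e_def using EE_nonneg by simp
  have dpos: "0 < cmod (1 - \<omega>)" using om unfolding \<omega>_def by simp
  define t1 where "t1 = u i - Q i p * u p"
  define t2 where "t2 = u p - Q p r * u r"
  define t3 where "t3 = u r - Q r i * u i"
  have t1: "cmod t1 \<le> e" unfolding t1_def e_def using term_le_EE fin i p ip by blast
  have t2: "cmod t2 \<le> e" unfolding t2_def e_def using term_le_EE fin p r pr by blast
  have t3: "cmod t3 \<le> e" unfolding t3_def e_def using term_le_EE fin r i ri by blast
  have qip: "cmod (Q i p) = 1" and qpr: "cmod (Q p r) = 1" using hq i p r ip pr by auto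
  have id: "(1 - \<omega>) * u i = t1 + Q i p * t2 + Q i p * Q p r * t3"
    unfolding t1_def t2_def t3_def \<omega>_def by (simp add: algebra_simps)
  have "cmod (1 - \<omega>) * cmod (u i) = cmod (t1 + Q i p * t2 + Q i p * Q p r * t3)"
    by (simp add: id[symmetric] norm_mult)
  also have "\<dots> \<le> cmod t1 + cmod (Q i p * t2) + cmod (Q i p * Q p r * t3)"
    by (meson add_mono norm_triangle_ineq order_trans order_refl)
  also have "\<dots> \<le> 3 * e" using t1 t2 t3 by (simp add: norm_mult qip qpr)
  finally have ui: "cmod (u i) \<le> 3 * e / cmod (1 - \<omega>)"
    using dpos by (simp add: field_simps)
  have C0: "0 \<le> C" unfolding C_def by simp
  have bnd: "cmod (u q) \<le> C * e" if q: "q \<in> S" for q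
  proof (cases "q = i")
    case True
    then show ?thesis using ui e0 unfolding C_def by (simp add: algebra_simps)
  next
    case False
    have "u q = (u q - Q q i * u i) + Q q i * u i" by simp
    then have "cmod (u q) \<le> cmod (u q - Q q i * u i) + cmod (Q q i * u i)"
      by (metis norm_triangle_ineq)
    also have "cmod (Q q i * u i) = cmod (u i)" using hq q i False by (simp add: norm_mult)
    also have "cmod (u q - Q q i * u i) \<le> e" unfolding e_def using term_le_EE fin q i False by blast
    finally show ?thesis using ui unfolding C_def by (simp add: algebra_simps)
  qed
  have "(\<Sum>q\<in>S. (cmod (u q))\<^sup>2) \<le> of_nat (card S) * (C * e)\<^sup>2"
    using bnd by (intro sum_bounded_above power_mono) auto
  also have "(C * e)\<^sup>2 = C\<^sup>2 * EE Q S u" unfolding e_def using EE_nonneg by (simp add: power_mult_distrib)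
  finally show ?thesis unfolding C_def \<omega>_def by (simp add: mult.assoc)
qed

lemma real_bound1:
  fixes a N L E :: real
  assumes "0 \<le> a" "N \<le> a" "a\<^sup>2 \<le> L * N" "0 \<le> L"
  shows "a \<le> L"
proof (cases "a = 0")
  case True then show ?thesis using assms by simp
next
  case False
  then have "0 < a" using assms by simp
  have "a * a \<le> L * a" using assms mult_left_mono[of N a L] by (simp add: power2_eq_square)
  then show ?thesis using \<open>0 < a\<close> by simp
qed

lemma real_bound2:
  fixes a N L E c2 M :: real
  assumes a0: "0 \<le> a" and N0: "0 \<le> N" and Na: "N \<le> a" and eq: "a\<^sup>2 \<le> L * N - c2 * E"
    and NM: "N \<le> M * E" and c2: "0 < c2" and M: "0 < M"
  shows "a \<le> max 0 (L - c2 / M)"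
proof -
  have "N / M \<le> E" using NM M by (simp add: field_simps)
  then have "c2 * (N / M) \<le> c2 * E" using c2 by (intro mult_left_mono) auto
  then have a2: "a\<^sup>2 \<le> (L - c2 / M) * N" using eq by (simp add: algebra_simps)
  show ?thesis
  proof (cases "L - c2 / M \<le> 0")
    case True
    then have "(L - c2 / M) * N \<le> 0" using N0 by (simp add: mult_nonpos_nonneg)
    then have "a\<^sup>2 \<le> 0" using a2 by linarith
    then have "a\<^sup>2 = 0" using zero_le_power2[of a] by linarith
    then have "a = 0" by simp
    then show ?thesis by simp
  next
    case False
    then have "a \<le> L - c2 / M" using real_bound1[OF a0 Na a2] by simp
    then show ?thesis by simp
  qed
qed


definition lam :: "nat \<Rightarrow> nat \<Rightarrow> nat \<Rightarrow> real" where
  "lam n k m = real k / real n + (real m - 1) * c_nk n k"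

definition Xset :: "complex set \<Rightarrow> nat \<Rightarrow> (nat \<Rightarrow> nat \<Rightarrow> complex) \<Rightarrow> nat set \<Rightarrow> real set" where
  "Xset K k f S = {vnorm k (\<lambda>i. \<Sum>j<k. VDV f S i j * x j) | x. (\<forall>j<k. x j \<in> K) \<and> vnorm k x = 1}"

lemma opnorm_Xset: "opnorm K k (VDV f S) = Sup (Xset K k f S)"
  unfolding opnorm_def Xset_def ..

lemma Xset_Av: "Xset K k f S = {vnorm k (Av f k S x) | x. (\<forall>j<k. x j \<in> K) \<and> vnorm k x = 1}"
  unfolding Xset_def Av_def ..

lemma Xset_ne:
  assumes "K = \<real> \<or> K = UNIV" "1 \<le> k"
  shows "Xset K k f S \<noteq> {}"
proof -
  define x :: "nat \<Rightarrow> complex" where "x = (\<lambda>j. if j = 0 then 1 else 0)"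
  have "(\<Sum>j<k. (cmod (x j))\<^sup>2) = (\<Sum>j<k. if j = 0 then 1 else 0)"
    unfolding x_def by (intro sum.cong) auto
  also have "\<dots> = 1" using assms(2) by simp
  finally have "(\<Sum>j<k. (cmod (x j))\<^sup>2) = 1" .
  then have "vnorm k x = 1" unfolding vnorm_def by simp
  moreover have "\<forall>j<k. x j \<in> K" using assms(1) unfolding x_def by auto
  ultimately show ?thesis unfolding Xset_Av by blast
qed

lemma per_x:
  assumes gram: "\<forall>i<n. \<forall>j<n. (\<Sum>l<k. analysis f i l * cnj (analysis f j l)) =
                 (if i = j then complex_of_real (real k / real n) else 0)
                 + complex_of_real (c_nk n k) * Q i j"
    and seidelQ: "seidel n Q" and S: "S \<subseteq> {..<n}" "S \<noteq> {}" and kn: "1 \<le> k" "k < n"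
    and x: "vnorm k x = 1"
  shows "vnorm k (Av f k S x) \<le> lam n k (card S)"
    "\<lbrakk>i \<in> S; p \<in> S; r \<in> S; i \<noteq> p; p \<noteq> r; r \<noteq> i; Q i p * Q p r * Q r i \<noteq> 1\<rbrakk> \<Longrightarrow>
     vnorm k (Av f k S x) \<le> max 0 (lam n k (card S) - (c_nk n k / 2) /
        (real (card S) * (1 + 3 / cmod (1 - Q i p * Q p r * Q r i))\<^sup>2))"
proof -
  have fin: "finite S" using S finite_subset by blast
  have cS: "1 \<le> card S" using fin S(2) by (simp add: Suc_le_eq card_gt_0_iff)
  have c0: "0 < c_nk n k" using c_pos kn by blast
  have L0: "0 < lam n k (card S)" unfolding lam_def using kn c0 cS by (auto intro!: add_pos_nonneg)
  let ?a = "vnorm k (Av f k S x)" and ?N = "\<Sum>i\<in>S. (cmod (yv f k x i))\<^sup>2" and ?E = "EE Q S (yv f k x)"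
  have a0: "0 \<le> ?a" by (rule vnorm_nonneg)
  have N0: "0 \<le> ?N" by (simp add: sum_nonneg)
  have Na: "?N \<le> ?a" using N_le[OF fin, of f k x] x by simp
  have eq: "?a\<^sup>2 = lam n k (card S) * ?N - c_nk n k / 2 * ?E"
    using key_id[OF gram seidelQ S(1)] unfolding lam_def by simp
  have E0: "0 \<le> ?E" by (rule EE_nonneg)
  show "?a \<le> lam n k (card S)"
  proof (rule real_bound1[OF a0 Na])
    show "?a\<^sup>2 \<le> lam n k (card S) * ?N" using eq E0 c0 by simp
  qed (use L0 in simp)
  assume tri: "i \<in> S" "p \<in> S" "r \<in> S" "i \<noteq> p" "p \<noteq> r" "r \<noteq> i" "Q i p * Q p r * Q r i \<noteq> 1"
  have hq: "\<forall>i\<in>S. \<forall>p\<in>S. i \<noteq> p \<longrightarrow> cmod (Q i p) = 1" using seidelQ S by (auto intro: seidel_U)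
  have NM: "?N \<le> real (card S) * (1 + 3 / cmod (1 - Q i p * Q p r * Q r i))\<^sup>2 * ?E"
    by (rule tri_bound[OF fin hq tri])
  have pos: "0 < 1 + 3 / cmod (1 - Q i p * Q p r * Q r i)" by (intro add_pos_nonneg) auto
  have M0: "0 < real (card S) * (1 + 3 / cmod (1 - Q i p * Q p r * Q r i))\<^sup>2"
    using cS pos by simp
  show "?a \<le> max 0 (lam n k (card S) - (c_nk n k / 2) /
        (real (card S) * (1 + 3 / cmod (1 - Q i p * Q p r * Q r i))\<^sup>2))"
    by (rule real_bound2[OF a0 N0 Na _ NM _ M0]) (use eq c0 in simp_all)
qed


lemma slist:
  assumes "finite S"
  shows "distinct (sorted_list_of_set S)" "set (sorted_list_of_set S) = S"
    "length (sorted_list_of_set S) = card S"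
    "bij_betw ((!) (sorted_list_of_set S)) {..<card S} S"
    "\<And>a. a < card S \<Longrightarrow> sorted_list_of_set S ! a \<in> S"
    "\<And>a b. a < card S \<Longrightarrow> b < card S \<Longrightarrow> (sorted_list_of_set S ! a = sorted_list_of_set S ! b) = (a = b)"
proof -
  show d: "distinct (sorted_list_of_set S)" by simp
  show st: "set (sorted_list_of_set S) = S" using assms by simp
  show l: "length (sorted_list_of_set S) = card S" using assms by simp
  show "bij_betw ((!) (sorted_list_of_set S)) {..<card S} S"
    by (rule bij_betw_nth[OF d]) (simp_all add: l st)
  show "\<And>a. a < card S \<Longrightarrow> sorted_list_of_set S ! a \<in> S"
    using l st nth_mem by metis
  show "\<And>a b. a < card S \<Longrightarrow> b < card S \<Longrightarrow> (sorted_list_of_set S ! a = sorted_list_of_set S ! b) = (a = b)"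
    using nth_eq_iff_index_eq[OF d] l by simp
qed

lemma cnj_Reals: "x \<in> \<real> \<Longrightarrow> cnj x \<in> \<real>"
  by (metis Reals_cnj_iff)

lemma unim_inv: "cmod z = 1 \<Longrightarrow> 1 / cnj z = z"
proof -
  assume "cmod z = 1"
  then have "z * cnj z = 1" using cnorm_sq[of z] by simp
  then show ?thesis by (metis mult_cancel_left1 nonzero_mult_div_cancel_right one_neq_zero div_by_1 mult_zero_right divide_divide_eq_right)
qed

lemma no_tri_switch:
  assumes field: "K = \<real> \<or> K = UNIV"
    and gram: "\<forall>i<n. \<forall>j<n. (\<Sum>l<k. analysis f i l * cnj (analysis f j l)) =
                 (if i = j then complex_of_real (real k / real n) else 0)
                 + complex_of_real (c_nk n k) * Q i j"
    and seidelQ: "seidel n Q" and S: "S \<subseteq> {..<n}" "card S = m" "1 \<le> m" and kn: "1 \<le> k" "k < n"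
    and fK: "\<forall>i<n. \<forall>j<k. f i j \<in> K"
    and notri: "\<forall>i\<in>S. \<forall>p\<in>S. \<forall>r\<in>S. i \<noteq> p \<and> p \<noteq> r \<and> r \<noteq> i \<longrightarrow> Q i p * Q p r * Q r i = 1"
  shows "switching_equiv K m (principal_sub Q S) JmI"
proof -
  have fin: "finite S" using S finite_subset by blast
  define \<sigma> where "\<sigma> = (!) (sorted_list_of_set S)"
  have \<sigma>S: "\<And>a. a < m \<Longrightarrow> \<sigma> a \<in> S" and \<sigma>eq: "\<And>a b. a < m \<Longrightarrow> b < m \<Longrightarrow> (\<sigma> a = \<sigma> b) = (a = b)"
    using slist[OF fin] S unfolding \<sigma>_def by auto
  have \<sigma>n: "\<And>a. a < m \<Longrightarrow> \<sigma> a < n" using \<sigma>S S by auto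
  define A where "A = principal_sub Q S"
  have A: "A a b = Q (\<sigma> a) (\<sigma> b)" for a b unfolding A_def principal_sub_def \<sigma>_def ..
  have c0: "0 < c_nk n k" using c_pos kn by blast
  have QK: "Q i j \<in> K" if "i < n" "j < n" for i j
  proof (cases "K = UNIV")
    case True then show ?thesis by simp
  next
    case False
    then have KR: "K = \<real>" using field by blast
    show ?thesis
    proof (cases "i = j")
      case True then show ?thesis using seidel_D[OF seidelQ] that KR by simp
    next
      case False
      have "(\<Sum>l<k. analysis f i l * cnj (analysis f j l)) = complex_of_real (c_nk n k) * Q i j"
        using gram[rule_format, OF that] False by simp
      then have "Q i j = (\<Sum>l<k. analysis f i l * cnj (analysis f j l)) / complex_of_real (c_nk n k)"
        using c0 by simp
      moreover have "(\<Sum>l<k. analysis f i l * cnj (analysis f j l)) \<in> \<real>"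
        using fK KR that unfolding analysis_def by (intro sum_in_Reals Reals_mult) (simp_all add: cnj_Reals)
      ultimately show ?thesis using KR by simp
    qed
  qed
  have herm: "A a b = cnj (A b a)" if "a < m" "b < m" for a b
    using seidel_H[OF seidelQ] \<sigma>n that unfolding A by blast
  have unim: "cmod (A a b) = 1" if "a < m" "b < m" "a \<noteq> b" for a b
    using seidel_U[OF seidelQ] \<sigma>n \<sigma>eq that unfolding A by blast
  have diag: "A a a = 0" if "a < m" for a
    using seidel_D[OF seidelQ] \<sigma>n that unfolding A by blast
  have tri: "A a b * A b c * A c a = 1" if "a < m" "b < m" "c < m" "a \<noteq> b" "b \<noteq> c" "c \<noteq> a" for a b c
    using notri \<sigma>S \<sigma>eq that unfolding A by simp
  define d where "d a = (if a = 0 then 1 else A a 0)" for a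
  have m0: "0 < m" using S by simp
  have dK: "d a \<in> K \<and> cmod (d a) = 1" if "a < m" for a
    using that QK \<sigma>n m0 unim field unfolding d_def A by auto
  have main: "A a b = d a * JmI a b / d b" if a: "a < m" and b: "b < m" for a b
  proof (cases "a = b")
    case True then show ?thesis using diag a unfolding JmI_def by simp
  next
    case ab: False
    then have J: "JmI a b = 1" unfolding JmI_def by simp
    show ?thesis
    proof (cases "a = 0")
      case True
      then have "b \<noteq> 0" using ab by simp
      then have "d b = cnj (A 0 b)" using herm[OF b m0] unfolding d_def by simp
      then show ?thesis using True J unim_inv[OF unim[OF m0 b \<open>b \<noteq> 0\<close>[symmetric]]] unfolding d_def by simp
    next
      case a0: False
      show ?thesis
      proof (cases "b = 0")
        case True then show ?thesis using a0 J unfolding d_def by simp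
      next
        case b0: False
        have db: "d b = cnj (A 0 b)" using herm[OF b m0] b0 unfolding d_def by simp
        have t: "A a 0 * A 0 b * A b a = 1" using tri[OF a m0 b a0 b0[symmetric] ab[symmetric]] .
        have "A b a = cnj (A a b)" by (rule herm[OF b a])
        then have t2: "A a 0 * A 0 b * cnj (A a b) = 1" using t by simp
        have nz: "cnj (A a b) \<noteq> 0" using unim[OF a b ab] by auto
        have "A a 0 * A 0 b = 1 / cnj (A a b)" using t2 nz by (simp add: eq_divide_eq)
        also have "\<dots> = A a b" by (rule unim_inv[OF unim[OF a b ab]])
        finally have e1: "A a 0 * A 0 b = A a b" .
        have "d a * JmI a b / d b = A a 0 * (1 / cnj (A 0 b))" using a0 J db unfolding d_def by simp
        also have "1 / cnj (A 0 b) = A 0 b" by (rule unim_inv[OF unim[OF m0 b b0[symmetric]]])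
        finally show ?thesis using e1 by simp
      qed
    qed
  qed
  show ?thesis
    unfolding switching_equiv_def A_def[symmetric]
  proof (rule exI[of _ id], rule exI[of _ d], intro conjI allI impI)
    show "id permutes {..<m}" by simp
    fix i assume "i < m"
    then show "d i \<in> K" "cmod (d i) = 1" using dK by auto
  next
    fix i j assume "i < m" "j < m"
    then show "A i j = d (id i) * JmI (id i) (id j) / d (id j)" using main by simp
  qed
qed


lemma opnorm_le:
  assumes field: "K = \<real> \<or> K = UNIV"
    and gram: "\<forall>i<n. \<forall>j<n. (\<Sum>l<k. analysis f i l * cnj (analysis f j l)) =
                 (if i = j then complex_of_real (real k / real n) else 0)
                 + complex_of_real (c_nk n k) * Q i j"
    and seidelQ: "seidel n Q" and S: "S \<subseteq> {..<n}" "S \<noteq> {}" and kn: "1 \<le> k" "k < n"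
  shows "opnorm K k (VDV f S) \<le> lam n k (card S)"
    "\<lbrakk>i \<in> S; p \<in> S; r \<in> S; i \<noteq> p; p \<noteq> r; r \<noteq> i; Q i p * Q p r * Q r i \<noteq> 1\<rbrakk> \<Longrightarrow>
     opnorm K k (VDV f S) < lam n k (card S)"
proof -
  have ne: "Xset K k f S \<noteq> {}" by (rule Xset_ne[OF field kn(1)])
  show "opnorm K k (VDV f S) \<le> lam n k (card S)"
    unfolding opnorm_Xset
    by (rule cSup_least[OF ne]) (auto simp: Xset_Av intro: per_x(1)[OF gram seidelQ S kn])
  assume tri: "i \<in> S" "p \<in> S" "r \<in> S" "i \<noteq> p" "p \<noteq> r" "r \<noteq> i" "Q i p * Q p r * Q r i \<noteq> 1"
  define B where "B = max 0 (lam n k (card S) - (c_nk n k / 2) /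
        (real (card S) * (1 + 3 / cmod (1 - Q i p * Q p r * Q r i))\<^sup>2))"
  have "opnorm K k (VDV f S) \<le> B"
    unfolding opnorm_Xset
  proof (rule cSup_least[OF ne])
    fix z assume "z \<in> Xset K k f S"
    then obtain x where zx: "z = vnorm k (Av f k S x)" and x1: "vnorm k x = 1" unfolding Xset_Av by blast
    show "z \<le> B" unfolding zx B_def by (rule per_x(2)[OF gram seidelQ S kn x1 tri])
  qed
  also have "B < lam n k (card S)"
  proof -
    have fin: "finite S" using S finite_subset by blast
    have cS: "1 \<le> card S" using fin S(2) by (simp add: Suc_le_eq card_gt_0_iff)
    have c0: "0 < c_nk n k" using c_pos kn by blast
    have L0: "0 < lam n k (card S)" unfolding lam_def using kn c0 cS by (auto intro!: add_pos_nonneg)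
    have pos: "0 < 1 + 3 / cmod (1 - Q i p * Q p r * Q r i)" by (intro add_pos_nonneg) auto
    have M0: "0 < real (card S) * (1 + 3 / cmod (1 - Q i p * Q p r * Q r i))\<^sup>2"
      using cS pos by simp
    have "0 < (c_nk n k / 2) / (real (card S) * (1 + 3 / cmod (1 - Q i p * Q p r * Q r i))\<^sup>2)"
      using c0 M0 by simp
    then show ?thesis unfolding B_def using L0 by simp
  qed
  finally show "opnorm K k (VDV f S) < lam n k (card S)" .
qed

lemma attain:
  assumes field: "K = \<real> \<or> K = UNIV"
    and gram: "\<forall>i<n. \<forall>j<n. (\<Sum>l<k. analysis f i l * cnj (analysis f j l)) =
                 (if i = j then complex_of_real (real k / real n) else 0)
                 + complex_of_real (c_nk n k) * Q i j"
    and seidelQ: "seidel n Q" and S: "S \<subseteq> {..<n}" "card S = m" "1 \<le> m" and kn: "1 \<le> k" "k < n"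
    and fK: "\<forall>i<n. \<forall>j<k. f i j \<in> K"
    and sw: "switching_equiv K m (principal_sub Q S) JmI"
  shows "opnorm K k (VDV f S) = lam n k m"
proof -
  have fin: "finite S" using S finite_subset by blast
  have Sne: "S \<noteq> {}" using S by auto
  define \<sigma> where "\<sigma> = (!) (sorted_list_of_set S)"
  have \<sigma>S: "\<And>a. a < m \<Longrightarrow> \<sigma> a \<in> S" and \<sigma>eq: "\<And>a b. a < m \<Longrightarrow> b < m \<Longrightarrow> (\<sigma> a = \<sigma> b) = (a = b)"
    and bij: "bij_betw \<sigma> {..<m} S"
    using slist[OF fin] S unfolding \<sigma>_def by auto
  have \<sigma>n: "\<And>a. a < m \<Longrightarrow> \<sigma> a < n" using \<sigma>S S by auto
  obtain q d where q: "q permutes {..<m}" and dK: "\<forall>i<m. d i \<in> K \<and> cmod (d i) = 1"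
    and sq: "\<forall>i<m. \<forall>j<m. principal_sub Q S i j = d (q i) * JmI (q i) (q j) / d (q j)"
    using sw unfolding switching_equiv_def by blast
  define w where "w a = d (q a)" for a
  have qm: "\<And>a. a < m \<Longrightarrow> q a < m" using permutes_in_image[OF q] by simp
  have wK: "\<And>a. a < m \<Longrightarrow> w a \<in> K" and wU: "\<And>a. a < m \<Longrightarrow> cmod (w a) = 1"
    using dK qm unfolding w_def by auto
  have wnz: "\<And>a. a < m \<Longrightarrow> w a \<noteq> 0" using wU by fastforce
  have Qw: "Q (\<sigma> a) (\<sigma> b) = w a / w b" if "a < m" "b < m" "a \<noteq> b" for a b
  proof -
    have "q a \<noteq> q b" using permutes_inj[OF q] that by (auto dest: injD)
    then show ?thesis using sq that unfolding principal_sub_def \<sigma>_def w_def JmI_def by simp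
  qed
  let ?t = "complex_of_real (real k / real n)" and ?C = "complex_of_real (c_nk n k)"
  define L where "L = lam n k m"
  define x where "x l = (\<Sum>a<m. w a * f (\<sigma> a) l)" for l
  have y: "yv f k x (\<sigma> b) = complex_of_real L * w b" if b: "b < m" for b
  proof -
    have "yv f k x (\<sigma> b) = (\<Sum>l<k. \<Sum>a<m. w a * (cnj (f (\<sigma> b) l) * f (\<sigma> a) l))"
      unfolding yv_def x_def by (simp add: sum_distrib_left mult_ac)
    also have "\<dots> = (\<Sum>a<m. \<Sum>l<k. w a * (cnj (f (\<sigma> b) l) * f (\<sigma> a) l))"
      by (rule sum.swap)
    also have "\<dots> = (\<Sum>a<m. w a * Gm f k (\<sigma> b) (\<sigma> a))"
      unfolding Gm_def analysis_def by (simp add: sum_distrib_left)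
    also have "\<dots> = (\<Sum>a<m. (if a = b then ?t * w b else 0) + ?C * (w b - (if a = b then w b else 0)))"
    proof (intro sum.cong refl)
      fix a assume "a \<in> {..<m}"
      then have a: "a < m" by simp
      have G: "Gm f k (\<sigma> b) (\<sigma> a) = (if \<sigma> b = \<sigma> a then ?t else 0) + ?C * Q (\<sigma> b) (\<sigma> a)"
        using gram \<sigma>n[OF a] \<sigma>n[OF b] unfolding Gm_def by simp
      show "w a * Gm f k (\<sigma> b) (\<sigma> a) = (if a = b then ?t * w b else 0) + ?C * (w b - (if a = b then w b else 0))"
      proof (cases "a = b")
        case True
        then show ?thesis using G seidel_D[OF seidelQ \<sigma>n[OF b]] by simp
      next
        case False
        then have "\<sigma> b \<noteq> \<sigma> a" using \<sigma>eq a b by simp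
        then show ?thesis using G False Qw[OF b a] wnz[OF a] by simp
      qed
    qed
    also have "\<dots> = ?t * w b + ?C * (of_nat m * w b - w b)"
    proof -
      have e1: "(\<Sum>a<m. w b - (if a = b then w b else 0)) = of_nat m * w b - w b"
        using b by (simp add: sum_subtractf)
      have "(\<Sum>a<m. ?C * (w b - (if a = b then w b else 0))) = ?C * (of_nat m * w b - w b)"
        by (simp only: e1 flip: sum_distrib_left)
      moreover have "(\<Sum>a<m. (if a = b then ?t * w b else 0)) = ?t * w b" using b by simp
      ultimately show ?thesis by (simp only: sum.distrib)
    qed
    also have "\<dots> = complex_of_real L * w b"
      unfolding L_def lam_def by (simp add: algebra_simps)
    finally show ?thesis .
  qed
  have Ax: "Av f k S x = (\<lambda>j. complex_of_real L * x j)"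
  proof
    fix j
    have "Av f k S x j = (\<Sum>i\<in>S. f i j * yv f k x i)" by (rule Av_eq[OF fin])
    also have "\<dots> = (\<Sum>b<m. f (\<sigma> b) j * yv f k x (\<sigma> b))"
      by (rule sum.reindex_bij_betw[OF bij, symmetric])
    also have "\<dots> = (\<Sum>b<m. complex_of_real L * (w b * f (\<sigma> b) j))"
      using y by (intro sum.cong refl) (simp add: mult_ac)
    also have "\<dots> = complex_of_real L * x j" by (simp add: x_def sum_distrib_left)
    finally show "Av f k S x j = complex_of_real L * x j" .
  qed
  have c0: "0 < c_nk n k" using c_pos kn by blast
  have L0: "0 < L" unfolding L_def lam_def using kn c0 S by (auto intro!: add_pos_nonneg)
  have vx: "0 < vnorm k x"
  proof (rule ccontr)
    assume "\<not> 0 < vnorm k x"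
    then have "vnorm k x = 0" using vnorm_nonneg[of k x] by simp
    then have "(\<Sum>j<k. (cmod (x j))\<^sup>2) = 0" using vnorm_sq[of k x] by simp
    then have "\<forall>j\<in>{..<k}. (cmod (x j))\<^sup>2 = 0" by (subst (asm) sum_nonneg_eq_0_iff) auto
    then have "\<forall>j<k. x j = 0" by simp
    then have "yv f k x (\<sigma> 0) = 0" unfolding yv_def by simp
    moreover have "yv f k x (\<sigma> 0) \<noteq> 0" using y[of 0] S L0 wnz[of 0] by simp
    ultimately show False by simp
  qed
  define x' where "x' j = complex_of_real (1 / vnorm k x) * x j" for j
  have vx': "vnorm k x' = 1" unfolding x'_def vnorm_scale using vx by (simp add: norm_divide)
  have x'K: "\<forall>j<k. x' j \<in> K"
  proof (cases "K = UNIV")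
    case True then show ?thesis by simp
  next
    case False
    then have KR: "K = \<real>" using field by blast
    show ?thesis
    proof (intro allI impI)
      fix j assume j: "j < k"
      have "x j \<in> \<real>" unfolding x_def using wK fK \<sigma>n j KR by (intro sum_in_Reals Reals_mult) auto
      then show "x' j \<in> K" unfolding x'_def KR by simp
    qed
  qed
  have "vnorm k (Av f k S x') = L"
  proof -
    have "Av f k S x' = (\<lambda>j. complex_of_real (1 / vnorm k x) * (complex_of_real L * x j))"
      unfolding x'_def Av_scale Ax ..
    then have "vnorm k (Av f k S x') = cmod (complex_of_real (1 / vnorm k x)) * (cmod (complex_of_real L) * vnorm k x)"
      using vnorm_scale[of k "complex_of_real (1 / vnorm k x)" "\<lambda>j. complex_of_real L * x j"]
        vnorm_scale[of k "complex_of_real L" x] by simp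
    then have "vnorm k (Av f k S x') = (1 / vnorm k x) * (L * vnorm k x)"
      using vx L0 by (simp only: norm_of_real abs_of_pos less_divide_eq_1_pos) (simp add: abs_of_pos)
    then show ?thesis using vx by simp
  qed
  then have LX: "L \<in> Xset K k f S" unfolding Xset_Av using vx' x'K by blast
  show ?thesis unfolding opnorm_Xset L_def[symmetric]
  proof (rule cSup_eq_maximum[OF LX])
    fix z assume "z \<in> Xset K k f S"
    then show "z \<le> L" unfolding Xset_Av L_def using per_x(1)[OF gram seidelQ S(1) Sne kn] S by auto
  qed
qed


theorem corollary3p5:
  fixes K :: "complex set" and n k :: nat
    and f :: "nat \<Rightarrow> nat \<Rightarrow> complex" and Q :: "nat \<Rightarrow> nat \<Rightarrow> complex"
  assumes field: "K = \<real> \<or> K = UNIV"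
    and k_pos: "1 \<le> k" and k_lt_n: "k < n"
    and frame: "parseval_frame K n k f"
    and unif: "c_uniform K n k f 2"
    and seidelQ: "seidel n Q"
    and gram: "\<forall>i<n. \<forall>j<n. (\<Sum>l<k. analysis f i l * cnj (analysis f j l)) =
                 (if i = j then complex_of_real (real k / real n) else 0)
                 + complex_of_real (c_nk n k) * Q i j"
    and m: "1 \<le> m" "m \<le> n"
  shows "e_inf K n k f m \<le> real k / real n + (real m - 1) * c_nk n k \<and>
         (e_inf K n k f m = real k / real n + (real m - 1) * c_nk n k \<longleftrightarrow>
          (\<exists>S\<in>Dsets n m. switching_equiv K m (principal_sub Q S) JmI))"
proof -
  have fK: "\<forall>i<n. \<forall>j<k. f i j \<in> K" using frame unfolding parseval_frame_def by blast
  define L where "L = real k / real n + (real m - 1) * c_nk n k"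
  have Lm: "lam n k m = L" unfolding lam_def L_def ..
  have kn: "1 \<le> k" "k < n" using k_pos k_lt_n by auto
  have finD: "finite (Dsets n m)"
    by (rule finite_subset[of _ "Pow {..<n}"]) (auto simp: Dsets_def)
  have neD: "{..<m} \<in> Dsets n m" unfolding Dsets_def using m by auto
  have SP: "S \<subseteq> {..<n}" "card S = m" "S \<noteq> {}" if "S \<in> Dsets n m" for S
    using that m unfolding Dsets_def by auto
  have le: "opnorm K k (VDV f S) \<le> L" if "S \<in> Dsets n m" for S
    using opnorm_le(1)[OF field gram seidelQ SP(1,3)[OF that] kn] SP(2)[OF that] Lm by simp
  let ?I = "(\<lambda>S. opnorm K k (VDV f S)) ` Dsets n m"
  have finI: "finite ?I" using finD by simp
  have neI: "?I \<noteq> {}" using neD by blast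
  have eq: "e_inf K n k f m = Max ?I" unfolding e_inf_def ..
  have upper: "e_inf K n k f m \<le> L"
    unfolding eq using finI neI le by (simp add: Max_le_iff)
  have iff: "e_inf K n k f m = L \<longleftrightarrow> (\<exists>S\<in>Dsets n m. switching_equiv K m (principal_sub Q S) JmI)"
  proof
    assume "\<exists>S\<in>Dsets n m. switching_equiv K m (principal_sub Q S) JmI"
    then obtain S where S: "S \<in> Dsets n m" and sw: "switching_equiv K m (principal_sub Q S) JmI" by blast
    have "opnorm K k (VDV f S) = L"
      using attain[OF field gram seidelQ SP(1,2)[OF S] m(1) kn fK sw] Lm by simp
    then have "L \<le> e_inf K n k f m" unfolding eq using finI S by (metis Max_ge image_eqI)
    then show "e_inf K n k f m = L" using upper by simp
  next
    assume e: "e_inf K n k f m = L"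
    have "Max ?I \<in> ?I" using finI neI by (rule Max_in)
    then obtain S where S: "S \<in> Dsets n m" and oS: "opnorm K k (VDV f S) = L"
      using e unfolding eq by auto
    have notri: "\<forall>i\<in>S. \<forall>p\<in>S. \<forall>r\<in>S. i \<noteq> p \<and> p \<noteq> r \<and> r \<noteq> i \<longrightarrow> Q i p * Q p r * Q r i = 1"
    proof (intro ballI impI, rule ccontr)
      fix i p r assume "i \<in> S" "p \<in> S" "r \<in> S" "i \<noteq> p \<and> p \<noteq> r \<and> r \<noteq> i"
        "Q i p * Q p r * Q r i \<noteq> 1"
      then have "opnorm K k (VDV f S) < lam n k (card S)"
        using opnorm_le(2)[OF field gram seidelQ SP(1,3)[OF S] kn] by blast
      then show False using oS SP(2)[OF S] Lm by simp
    qed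
    show "\<exists>S\<in>Dsets n m. switching_equiv K m (principal_sub Q S) JmI"
      using no_tri_switch[OF field gram seidelQ SP(1,2)[OF S] m(1) kn fK notri] S by blast
  qed
  show ?thesis using upper iff unfolding L_def by blast
qed

end
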